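(* Let $\mu$ be a Borel probability measure on $\mathbb{R}$ with $\mathbb{E}_\mu[X^2]<\infty$. For $z\in\mathbb{C}$ define $$d(z;\mu)=\int_{-\infty}^{\infty}\phi(y-z)\Big(-\tfrac12\log(2\pi)-\tfrac{(y-z)^2}{2}-\log p_Y(y;\mu)\Big)\,dy,$$ where $\phi(w)=\frac{1}{\sqrt{2\pi}}e^{-w^2/2}$ is extended to complex $w$. Then the integral converges for every $z\in\mathbb{C}$ and $d(\cdot;\mu)$ is holomorphic (entire) on $\mathbb{C}$. Consequently $x\mapsto d(x;\mu)$ is continuous on $\mathbb{R}$.
   Context: $p_Y(y;\mu)=\mathbb{E}_\mu[\phi(y-X)]$ for real $y$, with $\phi(t)=\frac{1}{\sqrt{2\pi}}e^{-t^2/2}$. For real $z=x$, $d(x;\mu)$ equals the relative entropy between the $N(x,1)$ density and $p_Y(\cdot;\mu)$. *)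

theory Defs
  imports "HOL-Probability.Probability"
begin

definition phi_c :: "complex \<Rightarrow> complex" where
  "phi_c w = exp (- (w ^ 2) / 2) / complex_of_real (sqrt (2 * pi))"

definition phi :: "real \<Rightarrow> real" where
  "phi t = exp (- (t ^ 2) / 2) / sqrt (2 * pi)"

definition pY :: "real measure \<Rightarrow> real \<Rightarrow> real" where
  "pY \<mu> y = (\<integral>x. phi (y - x) \<partial>\<mu>)"

definition d_integrand :: "real measure \<Rightarrow> complex \<Rightarrow> real \<Rightarrow> complex" where
  "d_integrand \<mu> z y =
     phi_c (complex_of_real y - z) *
       (- complex_of_real (ln (2 * pi) / 2) - (complex_of_real y - z) ^ 2 / 2
        - complex_of_real (ln (pY \<mu> y)))"

definition d :: "real measure \<Rightarrow> complex \<Rightarrow> complex" where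
  "d \<mu> z = (\<integral>y. d_integrand \<mu> z y \<partial>lborel)"

end

theory Submission imports Defs begin


lemma phi_cont: "continuous_on UNIV phi"
  unfolding phi_def by (intro continuous_intros) auto

lemma phi_meas[measurable]: "phi \<in> borel_measurable borel"
  using phi_cont by (rule borel_measurable_continuous_onI)

lemma phi_pos: "0 < phi t" unfolding phi_def by simp

lemma phi_le: "phi t \<le> 1 / sqrt (2*pi)"
  unfolding phi_def by (simp add: divide_right_mono)

lemma pY_facts:
  fixes \<mu> :: "real measure"
  assumes P: "prob_space \<mu>" and S: "sets \<mu> = sets borel"
  shows "pY \<mu> \<in> borel_measurable borel"
    and "\<exists>C\<ge>0. \<forall>y. \<bar>ln (pY \<mu> y)\<bar> \<le> C + y\<^sup>2"
proof -
  interpret prob_space \<mu> by fact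
  have mb: "f \<in> borel_measurable \<mu>" if "f \<in> borel_measurable borel" for f :: "real \<Rightarrow> real"
    using that measurable_cong_sets[OF S refl] by blast
  have "(\<lambda>(y,x). phi (y - x)) \<in> borel_measurable (borel \<Otimes>\<^sub>M borel)"
    by measurable
  then have "(\<lambda>(y,x). phi (y - x)) \<in> borel_measurable (borel \<Otimes>\<^sub>M \<mu>)"
    using measurable_cong_sets[OF sets_pair_measure_cong[OF refl S] refl] by blast
  from borel_measurable_lebesgue_integral[where f="\<lambda>y x. phi (y - x)", OF this]
  show "pY \<mu> \<in> borel_measurable borel" unfolding pY_def by simp
  define s where "s = sqrt (2*pi)"
  have s1: "1 < s" unfolding s_def using pi_gt3 by (simp add: real_less_rsqrt)
  have intg: "integrable \<mu> (\<lambda>x. phi (y - x))" for y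
    by (rule integrable_const_bound[where B="1/s"])
       (auto simp: s_def phi_le abs_of_pos[OF phi_pos] intro!: mb)
  define m where "m = integral\<^sup>L \<mu> (\<lambda>x. exp (- (x\<^sup>2)))"
  have intm: "integrable \<mu> (\<lambda>x. exp (- (x\<^sup>2)))"
    by (rule integrable_const_bound[where B=1]) (auto intro!: mb)
  have "m \<noteq> 0"
  proof
    assume "m = 0"
    then have "AE x in \<mu>. exp (- (x\<^sup>2)) = 0"
      using integral_nonneg_eq_0_iff_AE[OF intm] unfolding m_def by simp
    then have "AE x in \<mu>. False" by simp
    then show False by (simp add: AE_False)
  qed
  moreover have "m \<ge> 0" unfolding m_def by (intro integral_nonneg_AE) auto
  ultimately have mpos: "m > 0" by simp
  have up: "pY \<mu> y \<le> 1/s" for y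
  proof -
    have "pY \<mu> y \<le> (\<integral>x. 1/s \<partial>\<mu>)" unfolding pY_def
      by (intro integral_mono intg) (auto simp: s_def phi_le)
    then show ?thesis by (simp add: prob_space)
  qed
  have low: "m * exp (- y\<^sup>2) / s \<le> pY \<mu> y" for y
  proof -
    have "phi (y - x) \<ge> exp (- y\<^sup>2) / s * exp (- (x\<^sup>2))" for x
    proof -
      have e: "(y - x)\<^sup>2 = 2*y\<^sup>2 + 2*x\<^sup>2 - (y+x)\<^sup>2" by (simp add: power2_eq_square algebra_simps)
      have "0 \<le> (y+x)\<^sup>2" by simp
      then have "- y\<^sup>2 + - (x\<^sup>2) \<le> - ((y - x)\<^sup>2) / 2" using e by linarith
      then have "exp (- y\<^sup>2) * exp (- (x\<^sup>2)) \<le> exp (- ((y - x)\<^sup>2) / 2)"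
        by (simp add: exp_add[symmetric])
      then show ?thesis unfolding phi_def s_def
        by (simp add: divide_right_mono)
    qed
    then have "(\<integral>x. exp (- y\<^sup>2) / s * exp (- (x\<^sup>2)) \<partial>\<mu>) \<le> pY \<mu> y"
      unfolding pY_def by (intro integral_mono intg integrable_mult_right intm) auto
    then show ?thesis unfolding m_def by (simp add: mult.commute)
  qed
  have lowpos: "0 < m * exp (- y\<^sup>2) / s" for y using mpos s1 by simp
  show "\<exists>C\<ge>0. \<forall>y. \<bar>ln (pY \<mu> y)\<bar> \<le> C + y\<^sup>2"
  proof (intro exI[of _ "\<bar>ln (m / s)\<bar>"] conjI allI)
    fix y
    have p0: "0 < pY \<mu> y" using low[of y] lowpos[of y] by linarith
    have "1/s \<le> 1" using s1 by simp
    then have "pY \<mu> y \<le> 1" using up[of y] by linarith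
    then have l0: "ln (pY \<mu> y) \<le> 0" using p0 by simp
    have "ln (m * exp (- y\<^sup>2) / s) \<le> ln (pY \<mu> y)"
      using low[of y] lowpos[of y] by simp
    moreover have "ln (m * exp (- y\<^sup>2) / s) = ln (m / s) - y\<^sup>2"
      using mpos s1 by (simp add: ln_mult ln_div)
    ultimately show "\<bar>ln (pY \<mu> y)\<bar> \<le> \<bar>ln (m / s)\<bar> + y\<^sup>2" using l0 by linarith
  qed simp
qed


definition Gf :: "complex \<Rightarrow> real \<Rightarrow> nat \<Rightarrow> complex \<Rightarrow> complex" where
  "Gf a y i z = phi_c (of_real y - z) *
     (if i = 0 then a - (of_real y - z)^2/2
      else if i = 1 then (of_real y - z)*a + (of_real y - z) - (of_real y - z)^3/2
      else (of_real y - z)*((of_real y - z)*a + (of_real y - z) - (of_real y - z)^3/2) - a - 1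
            + 3*(of_real y - z)^2/2)"

lemma phi_c_deriv:
  "((\<lambda>z. phi_c (of_real y - z)) has_field_derivative phi_c (of_real y - z) * (of_real y - z)) (at z within S)"
  unfolding phi_c_def
  by (auto intro!: derivative_eq_intros simp: field_simps power2_eq_square)

lemma Gf_deriv:
  assumes "i \<le> 1"
  shows "(Gf a y i has_field_derivative Gf a y (Suc i) z) (at z within S)"
proof -
  have D: "((\<lambda>z. phi_c (of_real y - z) * p z) has_field_derivative
          phi_c (of_real y - z) * ((of_real y - z) * p z + p')) (at z within S)"
    if "(p has_field_derivative p') (at z within S)" for p p'
    using DERIV_mult[OF phi_c_deriv that] by (simp add: algebra_simps)
  show ?thesis
  proof (cases "i = 0")
    case True
    have "((\<lambda>z. a - (of_real y - z)^2/2) has_field_derivative (of_real y - z)) (at z within S)"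
      by (auto intro!: derivative_eq_intros simp: field_simps power2_eq_square)
    from D[OF this] show ?thesis using True unfolding Gf_def
      by (simp add: algebra_simps power2_eq_square power3_eq_cube)
  next
    case False
    then have i: "i = 1" using assms by simp
    have "((\<lambda>z. (of_real y - z)*a + (of_real y - z) - (of_real y - z)^3/2) has_field_derivative
          (- a - 1 + 3*(of_real y - z)^2/2)) (at z within S)"
      by (auto intro!: derivative_eq_intros simp: field_simps power2_eq_square)
    from D[OF this] show ?thesis using i unfolding Gf_def
      by (simp add: algebra_simps power2_eq_square power3_eq_cube)
  qed
qed

lemma phi_c_bound:
  assumes "cmod z \<le> R"
  shows "cmod (phi_c (of_real y - z)) \<le> exp (R^2/2) * sqrt 2 * normal_density 0 (sqrt 2) y"
proof -
  define u where "u = Re z"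
  define v where "v = Im z"
  have uv: "u^2 + v^2 \<le> R^2"
  proof -
    have "(cmod z)^2 \<le> R^2" by (rule power_mono[OF assms norm_ge_zero])
    then show ?thesis unfolding u_def v_def by (simp add: cmod_power2)
  qed
  have re: "Re (- ((of_real y - z)^2) / 2) = - ((y - u)^2 - v^2) / 2"
    unfolding u_def v_def by (simp add: power2_eq_square field_simps)
  have e: "(y - u)^2 = y^2/2 - u^2 + (y - 2*u)^2/2"
    by (simp add: power2_eq_square field_simps)
  have aux: "\<And>P Q Y S T :: real. P = - Y / 4 + S/2 - Q / 4 \<Longrightarrow> 0 \<le> Q \<Longrightarrow> S \<le> T \<Longrightarrow> P \<le> - Y/4 + T/2"
    by linarith
  have "- ((y - u)^2 - v^2) / 2 = - (y^2) / 4 + (u^2 + v^2)/2 - (y - 2 * u)^2 / 4"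
    by (simp only: e) (simp add: field_simps)
  from aux[OF this _ uv] have "- ((y - u)^2 - v^2) / 2 \<le> - (y^2)/4 + R^2/2" by simp
  then have ex: "exp (Re (- ((of_real y - z)^2) / 2)) \<le> exp (R^2/2) * exp (- (y^2)/4)"
    unfolding re by (simp add: exp_add[symmetric])
  have nd: "normal_density 0 (sqrt 2) y = exp (- (y^2)/4) / sqrt (4*pi)"
    unfolding normal_density_def by (simp add: mult.commute)
  have s: "sqrt (4*pi) = sqrt 2 * sqrt (2*pi)"
    by (simp add: real_sqrt_mult[symmetric])
  have "cmod (phi_c (of_real y - z)) = exp (Re (- ((of_real y - z)^2) / 2)) / sqrt (2*pi)"
    unfolding phi_c_def by (simp add: norm_divide)
  also have "\<dots> \<le> exp (R^2/2) * exp (- (y^2)/4) / sqrt (2*pi)"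
    using ex by (simp add: divide_right_mono)
  also have "\<dots> = exp (R^2/2) * sqrt 2 * normal_density 0 (sqrt 2) y"
    unfolding nd s by simp
  finally show ?thesis .
qed

lemma poly_bound:
  fixes w a :: complex
  assumes w: "norm w \<le> t" and a: "norm a \<le> t^2" and t: "1 \<le> t" and i: "i \<le> 2"
  shows "norm (if i = 0 then a - w^2/2
      else if i = 1 then w*a + w - w^3/2
      else w*(w*a + w - w^3/2) - a - 1 + 3*w^2/2) \<le> 6 * t^4"
proof -
  have t0: "0 \<le> t" using t by simp
  have w2: "norm (w^2) \<le> t^2" using w by (simp add: norm_power power_mono)
  have w3: "norm (w^3) \<le> t^3" using w by (simp add: norm_power power_mono)
  have t24: "t^2 \<le> t^4" "t \<le> t^4" "t^3 \<le> t^4" "1 \<le> t^4"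
    using power_increasing[of 2 4 t] power_increasing[of 1 4 t] power_increasing[of 3 4 t]
      one_le_power[of t 4] t by auto
  have "norm w * norm a \<le> t * t^2" by (rule mult_mono) (use w a t0 in auto)
  then have wa: "norm (w*a) \<le> t^3"
    by (simp add: norm_mult power3_eq_cube power2_eq_square)
  have n3: "norm (w^3/2) = norm (w^3)/2" by (simp add: norm_divide)
  have P: "norm (w*a + w - w^3/2) \<le> t^3 + t + t^3/2"
    using wa w w3 n3 norm_triangle_ineq4[of "w*a + w" "w^3/2"] norm_triangle_ineq[of "w*a" w]
    by linarith
  show ?thesis
  proof (cases "i = 0")
    case True
    have n2: "norm (w^2/2) = norm (w^2)/2" by (simp add: norm_divide)
    have "norm (a - w^2/2) \<le> t^2 + t^2/2"
      using a w2 n2 norm_triangle_ineq4[of a "w^2/2"] by linarith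
    then show ?thesis using True t24 by simp
  next
    case F: False
    show ?thesis
    proof (cases "i = 1")
      case True
      then show ?thesis using F P t24 by simp
    next
      case False
      have "norm (w*(w*a + w - w^3/2)) \<le> t * (t^3 + t + t^3/2)"
        using P w t0 by (simp add: norm_mult mult_mono)
      moreover have "norm (3*w^2/2) \<le> 3*t^2/2" using w2 by (simp add: norm_mult norm_divide norm_power)
      ultimately have "norm (w*(w*a + w - w^3/2) - a - 1 + 3*w^2/2)
          \<le> t * (t^3 + t + t^3/2) + t^2 + 1 + 3*t^2/2"
        using a norm_triangle_ineq4[of "w*(w*a + w - w^3/2)" a]
          norm_triangle_ineq4[of "w*(w*a + w - w^3/2) - a" 1]
          norm_triangle_ineq[of "w*(w*a + w - w^3/2) - a - 1" "3*w^2/2"]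
        by simp
      also have "\<dots> = 3/2 * t^4 + 7/2 * t^2 + 1" by (simp add: algebra_simps power2_eq_square power4_eq_xxxx power3_eq_cube)
      also have "\<dots> \<le> 6 * t^4" using t24 by simp
      finally show ?thesis using F False by simp
    qed
  qed
qed

lemma Gf_bound:
  assumes z: "cmod z \<le> R" and R: "0 \<le> R" and a: "norm a \<le> A + y^2" and A: "0 \<le> A" and i: "i \<le> 2"
  shows "norm (Gf a y i z) \<le> 48 * exp (R^2/2) * sqrt 2 * normal_density 0 (sqrt 2) y * (y^4 + (R + A + 1)^4)"
proof -
  define t where "t = \<bar>y\<bar> + (R + A + 1)"
  have t1: "1 \<le> t" unfolding t_def using R A by simp
  have "norm (of_real y - z) \<le> norm (of_real y :: complex) + norm z" by (rule norm_triangle_ineq4)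
  then have w: "norm (of_real y - z) \<le> t" unfolding t_def using z R A by simp
  have "A + y^2 \<le> t^2"
  proof -
    have "t^2 = y^2 + 2*\<bar>y\<bar>*(R+A+1) + (R+A+1)^2" unfolding t_def
      by (simp add: power2_eq_square algebra_simps)
    moreover have "A \<le> (R+A+1)^2"
    proof -
      have "(R+A+1)*1 \<le> (R+A+1)*(R+A+1)" by (rule mult_left_mono) (use R A in auto)
      then show ?thesis unfolding power2_eq_square by (rule order_trans[rotated]) (use R A in simp)
    qed
    moreover have "0 \<le> 2*\<bar>y\<bar>*(R+A+1)" using R A by simp
    ultimately show ?thesis by linarith
  qed
  with a have a': "norm a \<le> t^2" by linarith
  have P: "norm (if i = 0 then a - (of_real y - z)^2/2
      else if i = 1 then (of_real y - z)*a + (of_real y - z) - (of_real y - z)^3/2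
      else (of_real y - z)*((of_real y - z)*a + (of_real y - z) - (of_real y - z)^3/2) - a - 1
            + 3*(of_real y - z)^2/2) \<le> 6 * t^4"
    by (rule poly_bound[OF w a' t1 i])
  have t4: "t^4 \<le> 8 * (y^4 + (R + A + 1)^4)"
  proof -
    define p where "p = \<bar>y\<bar>" define q where "q = R + A + 1"
    have e2: "2*(p^2+q^2) - (p+q)^2 = (p-q)^2" by (simp add: power2_eq_square algebra_simps)
    have "0 \<le> 2*(p^2+q^2) - (p+q)^2" unfolding e2 by simp
    then have "(p+q)^2 \<le> 2*(p^2+q^2)" by simp
    then have "((p+q)^2)^2 \<le> (2*(p^2+q^2))^2" by (intro power_mono) auto
    also have "\<dots> \<le> 8*(p^4 + q^4)"
    proof -
      have "0 \<le> (p^2 - q^2)^2" by simp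
      then show ?thesis by (simp add: power2_eq_square power4_eq_xxxx algebra_simps)
    qed
    finally have "(p+q)^4 \<le> 8*(p^4+q^4)" by (simp add: power_mult[symmetric])
    moreover have "p^4 = y^4" unfolding p_def by (simp add: power_even_abs_numeral)
    ultimately show ?thesis unfolding t_def p_def q_def by simp
  qed
  have ph: "cmod (phi_c (of_real y - z)) \<le> exp (R^2/2) * sqrt 2 * normal_density 0 (sqrt 2) y"
    by (rule phi_c_bound[OF z])
  have "norm (Gf a y i z) \<le> (exp (R^2/2) * sqrt 2 * normal_density 0 (sqrt 2) y) * (6 * t^4)"
    unfolding Gf_def norm_mult by (intro mult_mono ph P) auto
  also have "\<dots> \<le> (exp (R^2/2) * sqrt 2 * normal_density 0 (sqrt 2) y) * (6 * (8 * (y^4 + (R + A + 1)^4)))"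
    using t4 by (intro mult_left_mono) auto
  also have "\<dots> = 48 * exp (R^2/2) * sqrt 2 * normal_density 0 (sqrt 2) y * (y^4 + (R + A + 1)^4)"
    by (simp add: algebra_simps)
  finally show ?thesis .
qed

lemma Dom_integrable:
  "integrable lborel (\<lambda>y. K * normal_density 0 (sqrt 2) y * (y^4 + B^4))"
proof -
  have "integrable lborel (\<lambda>y. K * (normal_density 0 (sqrt 2) y * (y - 0)^4) + (K * B^4) * normal_density 0 (sqrt 2) y)"
  proof (rule Bochner_Integration.integrable_add)
    show "integrable lborel (\<lambda>y. K * (normal_density 0 (sqrt 2) y * (y - 0)^4))"
      using integrable_normal_moment[where k=4 and \<mu>=0 and \<sigma>="sqrt 2"] by (intro integrable_mult_right) simp
    show "integrable lborel (\<lambda>y. (K * B^4) * normal_density 0 (sqrt 2) y)"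
      using integrable_normal_density[where \<mu>=0 and \<sigma>="sqrt 2"] by (intro integrable_mult_right) simp
  qed
  then show ?thesis by (simp add: algebra_simps)
qed

lemma Gf_meas[measurable]:
  assumes [measurable]: "f \<in> borel_measurable borel"
  shows "(\<lambda>y. Gf (f y) y i z) \<in> borel_measurable borel"
  unfolding Gf_def phi_c_def by measurable


theorem lemma2:
  fixes \<mu> :: "real measure"
  assumes "prob_space \<mu>"
    and "sets \<mu> = sets borel"
    and "integrable \<mu> (\<lambda>x. x ^ 2)"
  shows "(\<forall>z. integrable lborel (d_integrand \<mu> z))
       \<and> d \<mu> holomorphic_on UNIV
       \<and> continuous_on UNIV (\<lambda>x::real. d \<mu> (complex_of_real x))"
proof -
  note pf = pY_facts[OF assms(1,2)]
  note [measurable] = pf(1)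
  obtain C where C: "C \<ge> 0" "\<And>y. \<bar>ln (pY \<mu> y)\<bar> \<le> C + y\<^sup>2" using pf(2) by blast
  define aa :: "real \<Rightarrow> complex" where
    "aa y = - of_real (ln (2 * pi) / 2) - of_real (ln (pY \<mu> y))" for y
  define A where "A = \<bar>ln (2 * pi) / 2\<bar> + C"
  have A0: "0 \<le> A" unfolding A_def using C by simp
  have aab: "norm (aa y) \<le> A + y\<^sup>2" for y
  proof -
    have "norm (aa y) \<le> norm (of_real (ln (2 * pi) / 2) :: complex) + norm (of_real (ln (pY \<mu> y)) :: complex)"
      unfolding aa_def by (metis norm_minus_cancel norm_triangle_ineq4 minus_diff_eq diff_minus_eq_add uminus_add_conv_diff)
    then show ?thesis using C(2)[of y] unfolding A_def by simp
  qed
  have aa_meas[measurable]: "aa \<in> borel_measurable borel" unfolding aa_def by measurable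
  have eq: "d_integrand \<mu> z y = Gf (aa y) y 0 z" for z y
    unfolding d_integrand_def Gf_def aa_def by (simp add: algebra_simps)
  define Dom where "Dom R y = 48 * exp (R\<^sup>2/2) * sqrt 2 * normal_density 0 (sqrt 2) y * (y^4 + (R + A + 1)^4)" for R y
  have Dom_int: "integrable lborel (Dom R)" for R
    unfolding Dom_def by (rule Dom_integrable)
  have bnd: "norm (Gf (aa y) y i z) \<le> Dom R y" if "cmod z \<le> R" "0 \<le> R" "i \<le> 2" for z R y i
    unfolding Dom_def by (rule Gf_bound[OF that(1,2) aab A0 that(3)])
  have Gint: "integrable lborel (\<lambda>y. Gf (aa y) y i z)" if "i \<le> 2" for i z
  proof (rule Bochner_Integration.integrable_bound[OF Dom_int[of "cmod z"]])
    show "(\<lambda>y. Gf (aa y) y i z) \<in> borel_measurable lborel" by measurable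
    show "AE y in lborel. norm (Gf (aa y) y i z) \<le> norm (Dom (cmod z) y)"
      using bnd[OF order.refl norm_ge_zero that] by (auto intro: order_trans[OF _ abs_ge_self])
  qed
  have dI: "d \<mu> z = (\<integral>y. Gf (aa y) y 0 z \<partial>lborel)" for z
    unfolding d_def eq ..
  have part1: "\<forall>z. integrable lborel (d_integrand \<mu> z)"
    using Gint[of 0] unfolding eq by simp
  have deriv: "\<exists>D. (d \<mu> has_field_derivative D) (at z0)" for z0
  proof -
    define R where "R = cmod z0 + 1"
    have R0: "0 \<le> R" unfolding R_def by simp
    define D where "D = (\<integral>y. Gf (aa y) y 1 z0 \<partial>lborel)"
    define I where "I = (\<integral>y. Dom R y \<partial>lborel)"
    have inball: "cmod z \<le> R" if "z \<in> ball z0 1" for z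
    proof -
      have "cmod (z0 - z) < 1" using that by (simp add: dist_norm)
      moreover have "cmod z - cmod z0 \<le> cmod (z - z0)" by (rule norm_triangle_ineq2)
      moreover have "cmod (z - z0) = cmod (z0 - z)" by (rule norm_minus_commute)
      ultimately show ?thesis unfolding R_def by linarith
    qed
    have key: "norm (d \<mu> z - d \<mu> z0 - D * (z - z0)) \<le> I * (cmod (z - z0))\<^sup>2" if z: "z \<in> ball z0 1" for z
    proof -
      have pw: "norm (Gf (aa y) y 0 z - Gf (aa y) y 0 z0 - Gf (aa y) y 1 z0 * (z - z0))
                 \<le> Dom R y * (cmod (z - z0))\<^sup>2" for y
      proof -
        have "cmod (Gf (aa y) y 0 z - (\<Sum>i\<le>1. Gf (aa y) y i z0 * (z - z0) ^ i / fact i))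
              \<le> Dom R y * cmod (z - z0) ^ Suc 1 / fact 1"
        proof (rule complex_Taylor[where S="ball z0 1"])
          show "convex (ball z0 1)" by simp
          show "(Gf (aa y) y i has_field_derivative Gf (aa y) y (Suc i) x) (at x within ball z0 1)"
            if "i \<le> 1" for i x using that by (rule Gf_deriv)
          show "cmod (Gf (aa y) y (Suc 1) x) \<le> Dom R y" if "x \<in> ball z0 1" for x
            by (rule bnd[OF inball[OF that] R0]) simp
        qed (use z in auto)
        then show ?thesis by (simp add: power2_eq_square algebra_simps)
      qed
      have i1: "integrable lborel (\<lambda>y. Gf (aa y) y 0 z)" by (rule Gint) simp
      have i2: "integrable lborel (\<lambda>y. Gf (aa y) y 0 z0)" by (rule Gint) simp
      have i3': "integrable lborel (\<lambda>y. Gf (aa y) y 1 z0)" by (rule Gint) simp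
      have i3: "integrable lborel (\<lambda>y. Gf (aa y) y 1 z0 * (z - z0))"
        using i3' by (rule integrable_mult_left)
      have i12: "integrable lborel (\<lambda>y. Gf (aa y) y 0 z - Gf (aa y) y 0 z0)"
        using i1 i2 by (rule Bochner_Integration.integrable_diff)
      have "(\<integral>y. Gf (aa y) y 0 z - Gf (aa y) y 0 z0 - Gf (aa y) y 1 z0 * (z - z0) \<partial>lborel)
          = (\<integral>y. Gf (aa y) y 0 z - Gf (aa y) y 0 z0 \<partial>lborel) - (\<integral>y. Gf (aa y) y 1 z0 * (z - z0) \<partial>lborel)"
        by (rule Bochner_Integration.integral_diff[OF i12 i3])
      also have "\<dots> = d \<mu> z - d \<mu> z0 - D * (z - z0)"
        unfolding dI D_def Bochner_Integration.integral_diff[OF i1 i2] by simp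
      finally have "d \<mu> z - d \<mu> z0 - D * (z - z0) =
            (\<integral>y. Gf (aa y) y 0 z - Gf (aa y) y 0 z0 - Gf (aa y) y 1 z0 * (z - z0) \<partial>lborel)" ..
      also have "norm \<dots> \<le> (\<integral>y. norm (Gf (aa y) y 0 z - Gf (aa y) y 0 z0 - Gf (aa y) y 1 z0 * (z - z0)) \<partial>lborel)"
        by (rule integral_norm_bound)
      also have "\<dots> \<le> (\<integral>y. Dom R y * (cmod (z - z0))\<^sup>2 \<partial>lborel)"
        by (intro integral_mono pw integrable_norm Bochner_Integration.integrable_diff i12 i3 integrable_mult_left Dom_int)
      also have "\<dots> = I * (cmod (z - z0))\<^sup>2" unfolding I_def by simp
      finally show ?thesis .
    qed
    have "((\<lambda>z. (d \<mu> z - d \<mu> z0) / (z - z0) - D) \<longlongrightarrow> 0) (at z0)"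
    proof (rule Lim_null_comparison)
      show "\<forall>\<^sub>F z in at z0. norm ((d \<mu> z - d \<mu> z0) / (z - z0) - D) \<le> I * cmod (z - z0)"
        unfolding eventually_at
      proof (intro exI[of _ 1] conjI ballI impI allI)
        fix z assume "z \<noteq> z0 \<and> dist z z0 < 1"
        then have zb: "z \<in> ball z0 1" and nz: "z - z0 \<noteq> 0" by (auto simp: dist_commute)
        have "(d \<mu> z - d \<mu> z0) / (z - z0) - D = (d \<mu> z - d \<mu> z0 - D * (z - z0)) / (z - z0)"
          using nz by (simp add: field_simps)
        then have "norm ((d \<mu> z - d \<mu> z0) / (z - z0) - D) = norm (d \<mu> z - d \<mu> z0 - D * (z - z0)) / cmod (z - z0)"
          by (simp add: norm_divide)
        also have "\<dots> \<le> I * (cmod (z - z0))\<^sup>2 / cmod (z - z0)"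
          using key[OF zb] by (intro divide_right_mono) auto
        also have "\<dots> = I * cmod (z - z0)" using nz by (simp add: power2_eq_square)
        finally show "norm ((d \<mu> z - d \<mu> z0) / (z - z0) - D) \<le> I * cmod (z - z0)" .
      qed simp
      show "((\<lambda>z. I * cmod (z - z0)) \<longlongrightarrow> 0) (at z0)"
        by (intro tendsto_eq_intros) (auto intro: tendsto_ident_at)
    qed
    then have "((\<lambda>z. ((d \<mu> z - d \<mu> z0) / (z - z0) - D) + D) \<longlongrightarrow> 0 + D) (at z0)"
      by (intro tendsto_add) auto
    then have "(d \<mu> has_field_derivative D) (at z0)"
      unfolding has_field_derivative_iff by simp
    then show ?thesis by blast
  qed
  have hol: "d \<mu> holomorphic_on UNIV"
    using deriv by (simp add: holomorphic_on_open)
  have "continuous_on UNIV (d \<mu> \<circ> complex_of_real)"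
    by (intro continuous_on_compose continuous_intros
        continuous_on_subset[OF holomorphic_on_imp_continuous_on[OF hol]]) auto
  then have "continuous_on UNIV (\<lambda>x::real. d \<mu> (complex_of_real x))" by (simp add: o_def)
  with part1 hol show ?thesis by blast
qed
end
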